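(* Let $m\ge2$, $n\ge1$, $k\ge1$ an integer, and $\mathcal{A}=(a_{i_1i_2\cdots i_m})\in\mathbb{R}_+^{[m,n]}$ with $r_i(\mathcal{A})\neq0$ for all $i\in[n]$. Then \[\min_{i\in[n]}\frac{r_i(\mathcal{A}^{k+1})}{(r_i(\mathcal{A}^k))^{m-1}}\le\rho(\mathcal{A})\le\max_{i\in[n]}\frac{r_i(\mathcal{A}^{k+1})}{(r_i(\mathcal{A}^k))^{m-1}}.\]
   Context: $[n]=\{1,\ldots,n\}$. $\mathbb{R}_+^{[m,n]}$ denotes the set of order $m$, dimension $n$ tensors $\mathcal{A}=(a_{i_1\cdots i_m})$, $i_j\in[n]$, with nonnegative real entries. For a tensor $\mathcal{T}=(t_{i_1\cdots i_p})$ of order $p$ and dimension $n$, $r_i(\mathcal{T})=\sum_{i_2,\ldots,i_p=1}^n|t_{ii_2\cdots i_p}|$. General product: for $\mathcal{A}$ of order $m\ge2$ and $\mathcal{B}$ of order $q\ge1$ (dimension $n$), $\mathcal{A}\mathcal{B}=(c_{i\alpha_1\cdots\alpha_{m-1}})$ is the order $(m-1)(q-1)+1$, dimension $n$ tensor with $c_{i\alpha_1\cdots\alpha_{m-1}}=\sum_{i_2,\ldots,i_m=1}^n a_{ii_2\cdots i_m}b_{i_2\alpha_1}\cdots b_{i_m\alpha_{m-1}}$, $i\in[n]$, $\alpha_j\in[n]^{q-1}$ (where $b_{j\alpha}$ with $\alpha=(j_2,\ldots,j_q)$ means $b_{jj_2\cdots j_q}$). Powers: $\mathcal{A}^1=\mathcal{A}$,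 $\mathcal{A}^{j+1}=\mathcal{A}\mathcal{A}^j$. Eigenvalues: $\lambda\in\mathbb{C}$ is an eigenvalue of $\mathcal{A}$ if there is a nonzero $x\in\mathbb{C}^n$ with $\sum_{i_2,\ldots,i_m=1}^n a_{ii_2\cdots i_m}x_{i_2}\cdots x_{i_m}=\lambda x_i^{m-1}$ for all $i\in[n]$; $\rho(\mathcal{A})$ is the maximum modulus of the eigenvalues of $\mathcal{A}$. *)

theory Defs
  imports Complex_Main
begin

text \<open>Tensors of order p and dimension n are represented as functions
  from index lists (of length p, entries in {0..<n}, i.e. [n] shifted to 0-based)
  to scalars. Entries outside this index domain are irrelevant.\<close>

definition idx :: "nat \<Rightarrow> nat \<Rightarrow> nat list set" where
  "idx n p = {xs. length xs = p \<and> set xs \<subseteq> {..<n}}"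

definition rsum :: "nat \<Rightarrow> nat \<Rightarrow> (nat list \<Rightarrow> real) \<Rightarrow> nat \<Rightarrow> real" where
  "rsum n p T i = (\<Sum>xs\<in>idx n (p - 1). \<bar>T (i # xs)\<bar>)"

text \<open>General product AB, A of order m, B of order q (dimension n). The result has
  order (m-1)(q-1)+1; its index list is i followed by alpha_1 ... alpha_{m-1},
  each alpha_j of length q-1.\<close>
definition tprod :: "nat \<Rightarrow> nat \<Rightarrow> nat \<Rightarrow> (nat list \<Rightarrow> real) \<Rightarrow> (nat list \<Rightarrow> real) \<Rightarrow> (nat list \<Rightarrow> real)" where
  "tprod n m q A B = (\<lambda>ix.
     (\<Sum>is\<in>idx n (m - 1). A (hd ix # is) *
        (\<Prod>j<m - 1. B ((is ! j) # take (q - 1) (drop (j * (q - 1)) (tl ix))))))"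

text \<open>Order of A^k when A has order m.\<close>
fun tord :: "nat \<Rightarrow> nat \<Rightarrow> nat" where
  "tord m 0 = m"
| "tord m (Suc 0) = m"
| "tord m (Suc (Suc j)) = (m - 1) * (tord m (Suc j) - 1) + 1"

text \<open>Powers: A^1 = A, A^(j+1) = A A^j. (A^0 is not used; set to A.)\<close>
fun tpow :: "nat \<Rightarrow> nat \<Rightarrow> (nat list \<Rightarrow> real) \<Rightarrow> nat \<Rightarrow> (nat list \<Rightarrow> real)" where
  "tpow n m A 0 = A"
| "tpow n m A (Suc 0) = A"
| "tpow n m A (Suc (Suc j)) = tprod n m (tord m (Suc j)) A (tpow n m A (Suc j))"

definition is_eigenvalue :: "nat \<Rightarrow> nat \<Rightarrow> (nat list \<Rightarrow> real) \<Rightarrow> complex \<Rightarrow> bool" where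
  "is_eigenvalue n m A l \<longleftrightarrow> (\<exists>x :: nat \<Rightarrow> complex. (\<exists>i<n. x i \<noteq> 0) \<and>
     (\<forall>i<n. (\<Sum>is\<in>idx n (m - 1). complex_of_real (A (i # is)) * (\<Prod>j<m - 1. x (is ! j)))
            = l * x i ^ (m - 1)))"

definition spec_radius :: "nat \<Rightarrow> nat \<Rightarrow> (nat list \<Rightarrow> real) \<Rightarrow> real" where
  "spec_radius n m A = Sup (cmod ` {l. is_eigenvalue n m A l})"

end

theory Submission
  imports Defs "HOL-Homology.Homology"
begin


lemma proj_cont: "continuous_map (subtopology (powertop_real UNIV) S) euclideanreal (\<lambda>x. x k)"
  using continuous_map_product_projection[of k UNIV "\<lambda>_. euclideanreal"]
  by (simp add: continuous_map_from_subtopology)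

lemma brouwer_ball:
  fixes N :: nat and f :: "(nat \<Rightarrow> real) \<Rightarrow> nat \<Rightarrow> real"
  assumes N: "N \<ge> 1"
   and cont: "\<And>k. continuous_map (subtopology (powertop_real UNIV) {x. (\<forall>i\<ge>N. x i = 0) \<and> (\<Sum>i<N. x i ^ 2) \<le> 1}) euclideanreal (\<lambda>x. f x k)"
   and into: "\<And>x. x \<in> {x. (\<forall>i\<ge>N. x i = 0) \<and> (\<Sum>i<N. x i ^ 2) \<le> 1} \<Longrightarrow> f x \<in> {x. (\<forall>i\<ge>N. x i = 0) \<and> (\<Sum>i<N. x i ^ 2) \<le> 1}"
  shows "\<exists>x\<in>{x. (\<forall>i\<ge>N. x i = 0) \<and> (\<Sum>i<N. x i ^ 2) \<le> 1}. f x = x"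
proof (rule ccontr)
  define D where "D = {x::nat\<Rightarrow>real. (\<forall>i\<ge>N. x i = 0) \<and> (\<Sum>i<N. x i ^ 2) \<le> 1}"
  assume "\<not> ?thesis"
  then have nf: "\<And>x. x \<in> D \<Longrightarrow> f x \<noteq> x" unfolding D_def by blast
  define u where "u x = (\<lambda>i. x i - f x i)" for x :: "nat \<Rightarrow> real"
  define ip where "ip a b = (\<Sum>i<N. a i * b i)" for a b :: "nat \<Rightarrow> real"
  have ipsq: "ip a a = (\<Sum>i<N. a i ^ 2)" for a by (simp add: ip_def power2_eq_square)
  have nu_pos: "ip (u x) (u x) > 0" if x: "x \<in> D" for x
  proof (rule ccontr)
    assume "\<not> ?thesis"
    moreover have "ip (u x) (u x) \<ge> 0" unfolding ipsq by (intro sum_nonneg) auto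
    ultimately have "(\<Sum>i<N. u x i ^ 2) = 0" unfolding ipsq by simp
    then have "\<forall>i\<in>{..<N}. u x i ^ 2 = 0" by (subst (asm) sum_nonneg_eq_0_iff) auto
    then have "\<forall>i<N. f x i = x i" by (auto simp: u_def)
    moreover have "f x \<in> D" using into x unfolding D_def by blast
    ultimately have "f x = x" using x unfolding D_def
      by (intro ext) (metis (mono_tags, lifting) mem_Collect_eq not_less)
    with nf x show False by blast
  qed
  define s where "s x = (sqrt ((ip x (u x))^2 + ip (u x) (u x) * (1 - ip x x)) - ip x (u x)) / ip (u x) (u x)" for x
  define r where "r x = (\<lambda>i. x i + s x * u x i)" for x
  have r_sph: "ip (r x) (r x) = 1" if x: "x \<in> D" for x
  proof -
    have exp: "ip (r x) (r x) = ip x x + 2 * s x * ip x (u x) + (s x)^2 * ip (u x) (u x)"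
      by (simp add: ip_def r_def sum.distrib sum_distrib_left power2_eq_square algebra_simps)
    define a where "a = ip x x"
    define b where "b = ip x (u x)"
    define nu where "nu = ip (u x) (u x)"
    have a1: "a \<le> 1" using x by (simp add: a_def ipsq D_def)
    have nu: "nu > 0" using nu_pos[OF x] by (simp add: nu_def)
    have rad: "b^2 + nu * (1 - a) \<ge> 0" using a1 nu by (simp add: add_nonneg_nonneg)
    define q where "q = sqrt (b^2 + nu * (1 - a))"
    have q2: "q^2 = b^2 + nu * (1 - a)" using rad by (simp add: q_def)
    have sx: "s x = (q - b) / nu" by (simp add: s_def q_def a_def b_def nu_def)
    have "a + 2 * ((q - b) / nu) * b + ((q - b) / nu)^2 * nu = a + (q^2 - b^2) / nu"
      using nu by (simp add: field_simps power2_eq_square)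
    also have "\<dots> = 1" using q2 nu by (simp add: field_simps)
    finally show ?thesis using exp sx by (simp add: a_def b_def nu_def)
  qed
  have r_out: "r x i = 0" if "x \<in> D" "i \<ge> N" for x i
  proof -
    have "f x \<in> D" using into that(1) unfolding D_def by blast
    then show ?thesis using that by (simp add: r_def u_def D_def)
  qed
  have r_fix: "r x = x" if x: "x \<in> D" and a1: "ip x x = 1" for x
  proof -
    have fD: "f x \<in> D" using into x unfolding D_def by blast
    have "2 * ip x (f x) \<le> ip x x + ip (f x) (f x)"
    proof -
      have "ip x x + ip (f x) (f x) - 2 * ip x (f x) = (\<Sum>i<N. (x i - f x i)^2)"
        by (simp add: ip_def power2_eq_square sum_subtractf sum.distrib sum_distrib_left algebra_simps)
      moreover have "(\<Sum>i<N. (x i - f x i)^2) \<ge> 0" by (intro sum_nonneg) auto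
      ultimately show ?thesis by linarith
    qed
    moreover have "ip (f x) (f x) \<le> 1" using fD by (simp add: ipsq D_def)
    ultimately have "ip x (f x) \<le> 1" using a1 by linarith
    moreover have "ip x (u x) = ip x x - ip x (f x)"
      by (simp add: ip_def u_def algebra_simps sum_subtractf)
    ultimately have b0: "ip x (u x) \<ge> 0" using a1 by linarith
    have "s x = 0" using b0 a1 by (simp add: s_def)
    then show ?thesis by (simp add: r_def)
  qed
  let ?X = "subtopology (powertop_real UNIV) D"
  have cf: "continuous_map ?X euclideanreal (\<lambda>x. f x k)" for k using cont unfolding D_def by blast
  have cu: "continuous_map ?X euclideanreal (\<lambda>x. u x k)" for k
    unfolding u_def by (intro continuous_intros cf proj_cont)
  have cip: "continuous_map ?X euclideanreal (\<lambda>x. ip (g x) (h x))"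
    if "\<And>k. continuous_map ?X euclideanreal (\<lambda>x. g x k)" "\<And>k. continuous_map ?X euclideanreal (\<lambda>x. h x k)" for g h
    unfolding ip_def by (intro continuous_intros that) auto
  have cs: "continuous_map ?X euclideanreal s"
  proof -
    have "continuous_map ?X euclideanreal (\<lambda>x. (sqrt ((ip x (u x))^2 + ip (u x) (u x) * (1 - ip x x)) - ip x (u x)) / ip (u x) (u x))"
      apply (intro continuous_intros cip cu proj_cont)
      by (auto dest!: nu_pos)
    then show ?thesis by (simp add: s_def[abs_def])
  qed
  have cr: "continuous_map ?X euclideanreal (\<lambda>x. r x k)" for k
    unfolding r_def by (intro continuous_intros cs cu proj_cont)
  define M where "M = N - 1"
  have NM: "N = Suc M" using N by (simp add: M_def)
  have le_lt: "{..M} = {..<N}" using NM by auto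
  have tsph: "topspace (nsphere M) = {x. ip x x = 1 \<and> (\<forall>i\<ge>N. x i = 0)}"
    by (auto simp: nsphere ipsq le_lt NM Suc_le_eq)
  have "contractible_space (nsphere M)"
    unfolding contractible_space_def homotopic_with_def
  proof (intro exI conjI allI ballI)
    let ?h = "\<lambda>p::real \<times> (nat \<Rightarrow> real). if fst p = 0 then snd p else r (\<lambda>i. (1 - fst p) * snd p i)"
    let ?P = "prod_topology (top_of_set {0..1::real}) (nsphere M)"
    have inD: "(\<lambda>i. (1 - fst p) * snd p i) \<in> D" if pP: "p \<in> topspace ?P" for p
    proof -
      obtain t x where p: "p = (t, x)" "t \<in> {0..1}" "x \<in> topspace (nsphere M)"
      proof -
        have "p = (fst p, snd p)" "fst p \<in> {0..1}" "snd p \<in> topspace (nsphere M)"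
          using pP by (auto simp: topspace_prod_topology mem_Times_iff)
        then show ?thesis using that by blast
      qed
      have "(\<Sum>i<N. ((1 - t) * x i)^2) = (1-t)^2 * ip x x"
        by (simp add: ipsq power_mult_distrib sum_distrib_left)
      also have "\<dots> \<le> 1" using p tsph by (simp add: power_le_one)
      finally show ?thesis using p tsph by (simp add: D_def)
    qed
    have cphi: "continuous_map ?P ?X (\<lambda>p. (\<lambda>i. (1 - fst p) * snd p i))"
    proof (subst continuous_map_in_subtopology, intro conjI)
      show "continuous_map ?P (powertop_real UNIV) (\<lambda>p i. (1 - fst p) * snd p i)"
      proof (subst continuous_map_componentwise_UNIV, intro allI)
        fix k
        have c1: "continuous_map ?P euclideanreal (\<lambda>p. fst p)"
          by (metis continuous_map_fst continuous_map_from_subtopology continuous_map_into_fulltopology euclidean_product_topology)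
        have c2: "continuous_map ?P euclideanreal (\<lambda>p. snd p k)"
          using continuous_map_compose[OF continuous_map_snd proj_cont[of _ k]]
          unfolding nsphere by (simp add: o_def)
        show "continuous_map ?P euclideanreal (\<lambda>p. (1 - fst p) * snd p k)"
          by (intro continuous_intros c1 c2)
      qed
      show "(\<lambda>p i. (1 - fst p) * snd p i) \<in> topspace ?P \<rightarrow> D" using inD by blast
    qed
    have "continuous_map ?P (nsphere M) (\<lambda>p. r (\<lambda>i. (1 - fst p) * snd p i))"
    proof -
      have "continuous_map ?P (powertop_real UNIV) (\<lambda>p. r (\<lambda>i. (1 - fst p) * snd p i))"
      proof (subst continuous_map_componentwise_UNIV, intro allI)
        fix k show "continuous_map ?P euclideanreal (\<lambda>p. r (\<lambda>i. (1 - fst p) * snd p i) k)"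
          using continuous_map_compose[OF cphi cr[of k]] by (simp add: o_def)
      qed
      moreover have "r (\<lambda>i. (1 - fst p) * snd p i) \<in> {x. (\<Sum>i\<le>M. x i ^ 2) = 1 \<and> (\<forall>i>M. x i = 0)}"
        if "p \<in> topspace ?P" for p
        using r_sph[OF inD[OF that]] r_out[OF inD[OF that]] by (auto simp: le_lt ipsq NM Suc_le_eq)
      ultimately show ?thesis unfolding nsphere by (auto simp: continuous_map_in_subtopology)
    qed
    then show "continuous_map ?P (nsphere M) ?h"
    proof (rule continuous_map_eq)
      fix p assume p: "p \<in> topspace ?P"
      then have "p = (fst p, snd p)" "snd p \<in> topspace (nsphere M)"
          by (auto simp: topspace_prod_topology mem_Times_iff)
      then obtain t x where p': "p = (t, x)" "x \<in> topspace (nsphere M)" by blast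
      have xD: "x \<in> D" using p' tsph by (auto simp: D_def ipsq)
      show "r (\<lambda>i. (1 - fst p) * snd p i) = ?h p"
        using r_fix[OF xD] p' tsph by auto
    qed
    fix x show "?h (0, x) = id x" by simp
  next
    fix x show "(if fst (1::real, x) = 0 then snd (1::real, x) else r (\<lambda>i. (1 - fst (1::real,x)) * snd (1::real,x) i)) = (\<lambda>x. r (\<lambda>i. 0)) x" by simp
  qed auto
  then show False using non_contractible_space_nsphere by blast
qed



lemma finite_idx: "finite (idx n p)"
  unfolding idx_def using finite_lists_length_eq[of "{..<n}" p] by (simp add: conj_commute)

lemma idx_nth: "xs \<in> idx n p \<Longrightarrow> j < p \<Longrightarrow> xs ! j < n"
  unfolding idx_def by (auto dest: nth_mem)

definition Tm :: "nat \<Rightarrow> nat \<Rightarrow> (nat list \<Rightarrow> real) \<Rightarrow> (nat \<Rightarrow> real) \<Rightarrow> nat \<Rightarrow> real" where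
  "Tm n p B y i = (\<Sum>xs\<in>idx n p. B (i # xs) * (\<Prod>j<p. y (xs ! j)))"

lemma cont_Tm: "continuous_map (subtopology (powertop_real UNIV) S) euclideanreal (\<lambda>z. Tm n p B z i)"
  unfolding Tm_def by (intro continuous_intros proj_cont finite_idx) auto

lemma Tm_nonneg:
  assumes "\<forall>xs\<in>idx n p. B (i # xs) \<ge> 0" "\<forall>j<n. y j \<ge> 0"
  shows "Tm n p B y i \<ge> 0"
  unfolding Tm_def using assms idx_nth by (intro sum_nonneg mult_nonneg_nonneg prod_nonneg) auto

lemma Tm_lower:
  assumes "\<forall>xs\<in>idx n p. B (i # xs) \<ge> 0" "\<forall>j<n. y j \<ge> a" "a \<ge> 0"
  shows "a ^ p * Tm n p B (\<lambda>_. 1) i \<le> Tm n p B y i"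
  unfolding Tm_def sum_distrib_left
proof (rule sum_mono)
  fix xs assume xs: "xs \<in> idx n p"
  have "a ^ p = (\<Prod>j<p. a)" by simp
  also have "\<dots> \<le> (\<Prod>j<p. y (xs ! j))"
    using assms idx_nth[OF xs] by (intro prod_mono) auto
  finally show "a ^ p * (B (i # xs) * (\<Prod>j<p. 1)) \<le> B (i # xs) * (\<Prod>j<p. y (xs ! j))"
    using assms(1) xs by simp (metis mult.commute mult_left_mono)
qed

lemma Tm_upper:
  assumes "\<forall>xs\<in>idx n p. B (i # xs) \<ge> 0" "\<forall>j<n. y j \<le> a" "\<forall>j<n. 0 \<le> y j"
  shows "Tm n p B y i \<le> a ^ p * Tm n p B (\<lambda>_. 1) i"
  unfolding Tm_def sum_distrib_left
proof (rule sum_mono)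
  fix xs assume xs: "xs \<in> idx n p"
  have "(\<Prod>j<p. y (xs ! j)) \<le> (\<Prod>j<p. a)"
    using assms idx_nth[OF xs] by (intro prod_mono) auto
  also have "\<dots> = a ^ p" by simp
  finally show "B (i # xs) * (\<Prod>j<p. y (xs ! j)) \<le> a ^ p * (B (i # xs) * (\<Prod>j<p. 1))"
    using assms(1) xs by simp (metis mult.commute mult_left_mono)
qed

lemma continuous_map_root [continuous_intros]:
  "continuous_map X euclideanreal f \<Longrightarrow> continuous_map X euclideanreal (\<lambda>x. root p (f x))"
proof -
  have "continuous_map euclideanreal euclideanreal (root p)"
    by (simp add: continuous_at_imp_continuous_on isCont_real_root)
  moreover assume "continuous_map X euclideanreal f"
  ultimately show ?thesis using continuous_map_compose[of X euclideanreal f euclideanreal "root p"]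
    by (simp add: o_def)
qed


lemma brouwer_simplex:
  fixes n :: nat and g :: "(nat \<Rightarrow> real) \<Rightarrow> nat \<Rightarrow> real"
  defines "\<Delta> \<equiv> {y::nat\<Rightarrow>real. (\<forall>i\<ge>n. y i = 0) \<and> (\<forall>i<n. y i \<ge> 0) \<and> (\<Sum>i<n. y i) = 1}"
  assumes n: "n \<ge> 1"
   and cont: "\<And>k. continuous_map (subtopology (powertop_real UNIV) \<Delta>) euclideanreal (\<lambda>x. g x k)"
   and into: "\<And>x. x \<in> \<Delta> \<Longrightarrow> g x \<in> \<Delta>"
  shows "\<exists>x\<in>\<Delta>. g x = x"
proof -
  define D where "D = {x::nat\<Rightarrow>real. (\<forall>i\<ge>n. x i = 0) \<and> (\<Sum>i<n. x i ^ 2) \<le> 1}"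
  define pp where "pp x i = max (x i) 0" for x :: "nat \<Rightarrow> real" and i
  define v where "v x i = pp x i + max (1 - (\<Sum>j<n. pp x j)) 0 / real n" for x i
  define V where "V x = (\<Sum>i<n. v x i)" for x
  define rho where "rho x = (\<lambda>i. if i < n then v x i / V x else 0)" for x
  have V_eq: "V x = (\<Sum>j<n. pp x j) + max (1 - (\<Sum>j<n. pp x j)) 0" for x
    using n by (simp add: V_def v_def sum.distrib)
  have V1: "V x \<ge> 1" for x unfolding V_eq by linarith
  have v0: "v x i \<ge> 0" for x i by (simp add: v_def pp_def)
  have rhoD: "rho x \<in> \<Delta>" for x
  proof -
    have "(\<Sum>i<n. rho x i) = (\<Sum>i<n. v x i) / V x" by (simp add: rho_def sum_divide_distrib)
    also have "\<dots> = 1" using V1[of x] by (simp add: V_def)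
    finally show ?thesis using v0 V1[of x] by (auto simp: \<Delta>_def rho_def)
  qed
  have rho_fix: "rho x = x" if x: "x \<in> \<Delta>" for x
  proof -
    have pp: "pp x i = x i" if "i < n" for i using x that by (simp add: pp_def \<Delta>_def)
    then have s1: "(\<Sum>j<n. pp x j) = 1" using x by (simp add: \<Delta>_def)
    then have "V x = 1" by (simp add: V_eq)
    then show ?thesis using x pp s1 by (auto simp: rho_def v_def \<Delta>_def)
  qed
  have \<Delta>D: "\<Delta> \<subseteq> D"
  proof
    fix x assume x: "x \<in> \<Delta>"
    have "(\<Sum>i<n. x i ^ 2) \<le> (\<Sum>i<n. x i)"
    proof (rule sum_mono)
      fix i assume "i \<in> {..<n}"
      moreover have "x i \<le> 1"
      proof -
        have "x i \<le> (\<Sum>j<n. x j)" using x \<open>i \<in> {..<n}\<close>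
          by (intro member_le_sum) (auto simp: \<Delta>_def)
        then show ?thesis using x by (simp add: \<Delta>_def)
      qed
      ultimately show "x i ^ 2 \<le> x i" using x by (simp add: \<Delta>_def power2_eq_square mult_left_le)
    qed
    then show "x \<in> D" using x by (simp add: \<Delta>_def D_def)
  qed
  have crho: "continuous_map (subtopology (powertop_real UNIV) D) (subtopology (powertop_real UNIV) \<Delta>) rho"
  proof (subst continuous_map_in_subtopology, intro conjI)
    show "continuous_map (subtopology (powertop_real UNIV) D) (powertop_real UNIV) rho"
    proof (subst continuous_map_componentwise_UNIV, intro allI)
      fix k
      show "continuous_map (subtopology (powertop_real UNIV) D) euclideanreal (\<lambda>x. rho x k)"
      proof (cases "k < n")
        case True
        have "continuous_map (subtopology (powertop_real UNIV) D) euclideanreal (\<lambda>x. v x k / V x)"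
        proof -
          have cpp: "continuous_map (subtopology (powertop_real UNIV) D) euclideanreal (\<lambda>x. max (x j) 0)" for j
            by (intro continuous_map_real_max proj_cont continuous_map_canonical_const)
          have cv: "continuous_map (subtopology (powertop_real UNIV) D) euclideanreal (\<lambda>x. max (x j) 0 + max (1 - (\<Sum>j<n. max (x j) 0)) 0 / real n)" for j
            by (intro continuous_map_add continuous_map_real_divide continuous_map_real_max continuous_map_diff
                continuous_map_sum cpp proj_cont continuous_map_canonical_const) (use n in auto)
          have cV: "continuous_map (subtopology (powertop_real UNIV) D) euclideanreal (\<lambda>x. V x)"
            unfolding V_def v_def pp_def by (intro continuous_map_sum cv) auto
          have V0: "\<And>x. V x \<noteq> 0" using V1 by (metis not_one_le_zero)
          have cvk: "continuous_map (subtopology (powertop_real UNIV) D) euclideanreal (\<lambda>x. v x k)"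
            using cv[of k] by (simp add: v_def pp_def)
          show ?thesis by (rule continuous_map_real_divide[OF cvk cV V0])
        qed
        then show ?thesis using True by (simp add: rho_def)
      qed (simp add: rho_def)
    qed
    show "rho \<in> topspace (subtopology (powertop_real UNIV) D) \<rightarrow> \<Delta>" using rhoD by blast
  qed
  define f where "f x = g (rho x)" for x
  have "\<exists>x\<in>D. f x = x"
    unfolding D_def
  proof (rule brouwer_ball)
    show "1 \<le> n" using n .
    fix k
    show "continuous_map (subtopology (powertop_real UNIV) {x. (\<forall>i\<ge>n. x i = 0) \<and> (\<Sum>i<n. (x i)\<^sup>2) \<le> 1}) euclideanreal (\<lambda>x. f x k)"
      using continuous_map_compose[OF crho cont[of k]] by (simp add: o_def f_def D_def)
  next
    fix x show "f x \<in> {x. (\<forall>i\<ge>n. x i = 0) \<and> (\<Sum>i<n. (x i)\<^sup>2) \<le> 1}"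
      using into[OF rhoD[of x]] \<Delta>D by (auto simp: f_def D_def)
  qed
  then obtain x where x: "x \<in> D" "g (rho x) = x" by (auto simp: f_def)
  then have "x \<in> \<Delta>" using into[OF rhoD[of x]] by simp
  then show ?thesis using x rho_fix by metis
qed



lemma proj_cont': "continuous_map (powertop_real UNIV) euclideanreal (\<lambda>x. x k)"
  using continuous_map_product_projection[of k UNIV "\<lambda>_. euclideanreal"] by simp

lemma cont_Tm': "continuous_map (powertop_real UNIV) euclideanreal (\<lambda>z. Tm n p B z i)"
  unfolding Tm_def by (intro continuous_map_sum continuous_map_prod continuous_map_real_mult
      continuous_map_canonical_const proj_cont' finite_idx) auto

lemma Tm_cong: "(\<And>j. j < n \<Longrightarrow> y j = y' j) \<Longrightarrow> Tm n p B y i = Tm n p B y' i"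
  unfolding Tm_def by (intro sum.cong refl arg_cong2[where f="(*)"] prod.cong) (auto dest: idx_nth)

lemma perturbed:
  fixes n p :: nat and B :: "nat list \<Rightarrow> real" and c eps :: real
  assumes n: "n \<ge> 1" and p: "p \<ge> 1" and Bnn: "\<forall>i<n. \<forall>xs\<in>idx n p. B (i#xs) \<ge> 0"
   and c: "c > 0" "\<forall>i<n. Tm n p B (\<lambda>_. 1) i \<ge> c"
   and eps: "eps > 0" "eps \<le> 1"
  shows "\<exists>y \<mu>. (\<forall>i\<ge>n. y i = 0) \<and> (\<forall>i<n. y i \<ge> 0) \<and> (\<Sum>i<n. y i) = 1 \<and> c \<le> \<mu>
     \<and> \<mu> \<le> Max (Tm n p B (\<lambda>_. 1) ` {..<n}) + real n ^ p
     \<and> (\<forall>i<n. Tm n p B y i + eps = \<mu> * y i ^ p)"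
proof -
  define \<Delta> where "\<Delta> = {y::nat\<Rightarrow>real. (\<forall>i\<ge>n. y i = 0) \<and> (\<forall>i<n. y i \<ge> 0) \<and> (\<Sum>i<n. y i) = 1}"
  define gg where "gg y i = root p (Tm n p B y i + eps)" for y i
  define G where "G y = (\<Sum>j<n. gg y j)" for y
  define g where "g y = (\<lambda>i. if i < n then gg y i / G y else 0)" for y
  define R where "R = Max (Tm n p B (\<lambda>_. 1) ` {..<n})"
  have Tnn: "Tm n p B y i \<ge> 0" if "y \<in> \<Delta>" "i < n" for y i
    using that Bnn by (intro Tm_nonneg) (auto simp: \<Delta>_def)
  have ggpos: "gg y i > 0" if "y \<in> \<Delta>" "i < n" for y i
    using Tnn[OF that] eps p by (simp add: gg_def)
  have Gpos: "G y > 0" if "y \<in> \<Delta>" for y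
    unfolding G_def using ggpos[OF that] n by (intro sum_pos) (auto simp: lessThan_empty_iff)
  have gD: "g y \<in> \<Delta>" if y: "y \<in> \<Delta>" for y
  proof -
    have "(\<Sum>i<n. g y i) = (\<Sum>i<n. gg y i) / G y" by (simp add: g_def sum_divide_distrib)
    also have "\<dots> = 1" using Gpos[OF y] by (simp add: G_def)
    finally show ?thesis using ggpos[OF y] Gpos[OF y] by (auto simp: \<Delta>_def g_def less_imp_le)
  qed
  have cont: "continuous_map (subtopology (powertop_real UNIV) \<Delta>) euclideanreal (\<lambda>x. g x k)" for k
  proof (cases "k < n")
    case True
    have cgg: "continuous_map (subtopology (powertop_real UNIV) \<Delta>) euclideanreal (\<lambda>x. gg x j)" for j
      unfolding gg_def by (intro continuous_map_root continuous_map_add cont_Tm continuous_map_canonical_const)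
    have cG: "continuous_map (subtopology (powertop_real UNIV) \<Delta>) euclideanreal G"
      unfolding G_def[abs_def] by (intro continuous_map_sum cgg) auto
    have G0: "\<And>x. x \<in> topspace (subtopology (powertop_real UNIV) \<Delta>) \<Longrightarrow> G x \<noteq> 0"
      using Gpos by fastforce
    show ?thesis using True continuous_map_real_divide[OF cgg[of k] cG G0] by (simp add: g_def)
  qed (simp add: g_def)
  obtain y where yD: "y \<in> \<Delta>" and yfix: "g y = y"
    using brouwer_simplex[of n g] n cont gD unfolding \<Delta>_def by blast
  define \<mu> where "\<mu> = G y ^ p"
  have ypos: "y i > 0" if "i < n" for i
    using yfix ggpos[OF yD that] Gpos[OF yD] that by (metis divide_pos_pos g_def)
  have eq: "Tm n p B y i + eps = \<mu> * y i ^ p" if i: "i < n" for i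
  proof -
    have "y i = gg y i / G y" using yfix i by (metis g_def)
    then have "gg y i = G y * y i" using Gpos[OF yD] by (simp add: field_simps)
    then have "gg y i ^ p = \<mu> * y i ^ p" by (simp add: \<mu>_def power_mult_distrib)
    moreover have "gg y i ^ p = Tm n p B y i + eps"
      unfolding gg_def using Tnn[OF yD i] eps p by (intro real_root_pow_pos2) auto
    ultimately show ?thesis by simp
  qed
  have fin: "finite (y ` {..<n})" "y ` {..<n} \<noteq> {}" using n by (auto simp: lessThan_empty_iff)
  define a where "a = Min (y ` {..<n})"
  obtain i0 where i0: "i0 < n" "y i0 = a" using Min_in[OF fin] unfolding a_def by auto
  have amin: "\<forall>j<n. y j \<ge> a" unfolding a_def using fin by auto
  have apos: "a > 0" using ypos i0 by auto
  have "a ^ p * c \<le> a ^ p * Tm n p B (\<lambda>_. 1) i0" using c i0 apos by (intro mult_left_mono) auto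
  also have "\<dots> \<le> Tm n p B y i0" using Bnn i0 amin apos by (intro Tm_lower) auto
  also have "\<dots> < \<mu> * a ^ p" using eq[OF i0(1)] i0 eps by simp
  finally have "c \<le> \<mu>" using apos by (simp add: mult.commute)
  moreover have "\<mu> \<le> R + real n ^ p"
  proof -
    define b where "b = Max (y ` {..<n})"
    obtain i1 where i1: "i1 < n" "y i1 = b" using Max_in[OF fin] unfolding b_def by auto
    have bmax: "\<forall>j<n. y j \<le> b" unfolding b_def using fin by auto
    have bpos: "b > 0" using ypos i1 by auto
    have "1 = (\<Sum>i<n. y i)" using yD by (simp add: \<Delta>_def)
    also have "\<dots> \<le> (\<Sum>i<n. b)" using bmax by (intro sum_mono) auto
    finally have nb: "1 \<le> real n * b" by simp
    have "\<mu> * b ^ p = Tm n p B y i1 + eps" using eq[OF i1(1)] i1 by simp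
    also have "\<dots> \<le> b ^ p * Tm n p B (\<lambda>_. 1) i1 + 1"
      using Tm_upper[of n p B i1 y b] Bnn i1 bmax yD eps by (auto simp: \<Delta>_def)
    also have "\<dots> \<le> b ^ p * R + 1"
      using i1 bpos unfolding R_def by (intro add_right_mono mult_left_mono Max_ge) auto
    finally have "\<mu> * b ^ p \<le> b ^ p * R + 1" .
    then have "\<mu> \<le> R + 1 / b ^ p" using bpos by (simp add: field_simps)
    moreover have "1 / b ^ p \<le> real n ^ p"
    proof -
      have "1 / b \<le> real n" using nb bpos by (simp add: field_simps)
      then have "(1 / b) ^ p \<le> real n ^ p" using bpos by (intro power_mono) auto
      then show ?thesis by (simp add: power_one_over)
    qed
    ultimately show ?thesis by linarith
  qed
  ultimately show ?thesis using yD eq unfolding \<Delta>_def R_def by blast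
qed



lemma small_zero: fixes x :: real assumes "\<forall>N. \<bar>x\<bar> \<le> 1 / real (Suc N)" shows "x = 0"
proof (rule ccontr)
  assume "x \<noteq> 0"
  then obtain N where "inverse (real (Suc N)) < \<bar>x\<bar>" using reals_Archimedean[of "\<bar>x\<bar>"] by auto
  with assms show False by (simp add: inverse_eq_divide) (metis not_le)
qed

lemma eig_exists:
  fixes n p :: nat and B :: "nat list \<Rightarrow> real" and c :: real
  assumes n: "n \<ge> 1" and p: "p \<ge> 1" and Bnn: "\<forall>i<n. \<forall>xs\<in>idx n p. B (i#xs) \<ge> 0"
   and c: "c > 0" "\<forall>i<n. Tm n p B (\<lambda>_. 1) i \<ge> c"
  shows "\<exists>y \<mu>. (\<forall>i<n. y i \<ge> 0) \<and> (\<Sum>i<n. y i) = 1 \<and> c \<le> \<mu> \<and> (\<forall>i<n. Tm n p B y i = \<mu> * y i ^ p)"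
proof -
  define Cc where "Cc = Max (Tm n p B (\<lambda>_. 1) ` {..<n}) + real n ^ p"
  define box where "box i = (if i < n then {0..1} else if i = n then {c..Cc} else {0::real})" for i
  define K where "K = PiE UNIV box"
  define e where "e z i = Tm n p B z i - z n * z i ^ p" for z i
  define Fam where "Fam N = {z. (\<Sum>i<n. z i) = 1 \<and> (\<forall>i<n. \<bar>e z i\<bar> \<le> 1 / real (Suc N))}" for N
  have ce: "continuous_map (powertop_real UNIV) euclideanreal (\<lambda>z. e z i)" for i
    unfolding e_def by (intro continuous_map_diff continuous_map_real_mult continuous_map_real_pow cont_Tm' proj_cont')
  have cK: "compactin (powertop_real UNIV) K"
    unfolding K_def compactin_PiE by (auto simp: box_def)
  have closedF: "closedin (powertop_real UNIV) (Fam N)" for N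
  proof -
    have "Fam N = {z \<in> topspace (powertop_real UNIV). (\<Sum>i<n. z i) \<in> {1}} \<inter>
       \<Inter> ((\<lambda>i. {z \<in> topspace (powertop_real UNIV). e z i \<in> {-(1 / real (Suc N))..1 / real (Suc N)}}) ` {..<n})"
      using n by (auto simp: Fam_def abs_le_iff) (smt (verit) lessThan_iff)
    moreover have "closedin (powertop_real UNIV) {z \<in> topspace (powertop_real UNIV). (\<Sum>i<n. z i) \<in> {1}}"
      by (rule closedin_continuous_map_preimage[where Y=euclideanreal])
         (auto intro: continuous_map_sum proj_cont')
    moreover have "closedin (powertop_real UNIV)
       (\<Inter> ((\<lambda>i. {z \<in> topspace (powertop_real UNIV). e z i \<in> {-(1 / real (Suc N))..1 / real (Suc N)}}) ` {..<n}))"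
    proof (rule closedin_Inter)
      show "(\<lambda>i. {z \<in> topspace (powertop_real UNIV). e z i \<in> {-(1 / real (Suc N))..1 / real (Suc N)}}) ` {..<n} \<noteq> {}"
        using n by (auto simp: lessThan_empty_iff)
    next
      fix S assume "S \<in> (\<lambda>i. {z \<in> topspace (powertop_real UNIV). e z i \<in> {-(1 / real (Suc N))..1 / real (Suc N)}}) ` {..<n}"
      then obtain i where "S = {z \<in> topspace (powertop_real UNIV). e z i \<in> {-(1 / real (Suc N))..1 / real (Suc N)}}" by blast
      then show "closedin (powertop_real UNIV) S"
        by (simp only:) (rule closedin_continuous_map_preimage[OF ce], auto)
    qed
    ultimately show ?thesis by (simp add: closedin_Int)
  qed
  have mono: "Fam N' \<subseteq> Fam N" if "N \<le> N'" for N N'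
  proof -
    have "1 / real (Suc N') \<le> 1 / real (Suc N)" using that by (simp add: frac_le)
    then show ?thesis unfolding Fam_def by force
  qed
  have nonempty: "K \<inter> Fam N \<noteq> {}" for N
  proof -
    obtain y \<mu> where y: "\<forall>i\<ge>n. y i = 0" "\<forall>i<n. y i \<ge> 0" "(\<Sum>i<n. y i) = 1" "c \<le> \<mu>" "\<mu> \<le> Cc"
      "\<forall>i<n. Tm n p B y i + 1 / real (Suc N) = \<mu> * y i ^ p"
      using perturbed[OF n p Bnn c, of "1 / real (Suc N)"] unfolding Cc_def by auto
    define z where "z = y(n := \<mu>)"
    have Tz: "Tm n p B z i = Tm n p B y i" for i by (rule Tm_cong) (simp add: z_def)
    have yle: "y i \<le> 1" if "i < n" for i
    proof -
      have "y i \<le> (\<Sum>j<n. y j)" using y(2) that by (intro member_le_sum) auto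
      then show ?thesis using y(3) by simp
    qed
    have "z \<in> K" using y yle by (auto simp: K_def box_def z_def)
    moreover have "z \<in> Fam N"
    proof -
      have "(\<Sum>i<n. z i) = 1" using y(3) by (simp add: z_def)
      moreover have "\<bar>e z i\<bar> \<le> 1 / real (Suc N)" if "i < n" for i
      proof -
        have h: "Tm n p B y i + 1 / real (Suc N) = \<mu> * y i ^ p" using y(6) that by blast
        have "e z i = Tm n p B y i - \<mu> * y i ^ p" using Tz[of i] that by (simp add: e_def z_def)
        then have "e z i = - (1 / real (Suc N))" using h by linarith
        then show ?thesis by simp
      qed
      ultimately show ?thesis by (simp add: Fam_def)
    qed
    ultimately show ?thesis by blast
  qed
  have "K \<inter> \<Inter> (range Fam) \<noteq> {}"
  proof -
    have "\<forall>\<U>. (\<forall>C\<in>\<U>. closedin (powertop_real UNIV) C) \<and> (\<forall>\<F>. finite \<F> \<and> \<F> \<subseteq> \<U> \<longrightarrow> K \<inter> \<Inter>\<F> \<noteq> {}) \<longrightarrow> K \<inter> \<Inter>\<U> \<noteq> {}"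
      using cK unfolding compactin_fip by blast
    moreover have "K \<inter> \<Inter>\<F> \<noteq> {}" if fF: "finite \<F>" "\<F> \<subseteq> range Fam" for \<F>
    proof -
      obtain C where C: "finite C" "\<F> = Fam ` C" using finite_subset_image[OF fF] by auto
      define M where "M = Max (insert 0 C)"
      have "Fam M \<subseteq> \<Inter>\<F>"
      proof
        fix z assume "z \<in> Fam M"
        moreover have "N \<le> M" if "N \<in> C" for N using C that by (simp add: M_def)
        ultimately show "z \<in> \<Inter>\<F>" using C mono by blast
      qed
      then show ?thesis using nonempty[of M] by blast
    qed
    ultimately show ?thesis using closedF by blast
  qed
  then obtain z where z: "z \<in> K" "\<And>N. z \<in> Fam N" by blast
  have "\<forall>i<n. Tm n p B z i = z n * z i ^ p"
  proof (intro allI impI)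
    fix i assume "i < n"
    then have "\<forall>N. \<bar>e z i\<bar> \<le> 1 / real (Suc N)" using z(2) by (simp add: Fam_def)
    then have "e z i = 0" by (rule small_zero)
    then show "Tm n p B z i = z n * z i ^ p" by (simp add: e_def)
  qed
  moreover have "\<forall>i<n. z i \<ge> 0" "c \<le> z n"
  proof -
    have zb: "z i \<in> box i" for i using z(1) unfolding K_def by (simp add: PiE_iff)
    show "\<forall>i<n. z i \<ge> 0"
    proof (intro allI impI)
      fix i assume "i < n" then show "z i \<ge> 0" using zb[of i] by (simp add: box_def)
    qed
    show "c \<le> z n" using zb[of n] by (simp add: box_def)
  qed
  moreover have "(\<Sum>i<n. z i) = 1" using z(2)[of 0] by (simp add: Fam_def)
  ultimately show ?thesis by blast
qed



lemma idx_Nil [simp]: "idx n 0 = {[]}" by (auto simp: idx_def)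

lemma idx_append: "idx n (P + L) = (\<lambda>(zs, ws). zs @ ws) ` (idx n P \<times> idx n L)"
proof
  show "idx n (P + L) \<subseteq> (\<lambda>(zs, ws). zs @ ws) ` (idx n P \<times> idx n L)"
  proof
    fix ys assume ys: "ys \<in> idx n (P + L)"
    then have "(take P ys, drop P ys) \<in> idx n P \<times> idx n L"
      by (auto simp: idx_def dest: in_set_takeD in_set_dropD)
    moreover have "ys = (\<lambda>(zs, ws). zs @ ws) (take P ys, drop P ys)" by simp
    ultimately show "ys \<in> (\<lambda>(zs, ws). zs @ ws) ` (idx n P \<times> idx n L)" by blast
  qed
qed (auto simp: idx_def)

lemma inj_append_idx: "inj_on (\<lambda>(zs, ws). zs @ ws) (idx n P \<times> idx n L)"
  by (auto simp: inj_on_def idx_def)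

lemma chunk_in: "ys \<in> idx n (a * P) \<Longrightarrow> j < a \<Longrightarrow> take P (drop (j * P) ys) \<in> idx n P"
proof -
  assume ys: "ys \<in> idx n (a * P)" and j: "j < a"
  have "j * P + P \<le> a * P" using j by (metis add.commute mult_Suc mult_le_mono1 Suc_leI)
  then have "length (take P (drop (j * P) ys)) = P" using ys by (simp add: idx_def)
  moreover have "set (take P (drop (j * P) ys)) \<subseteq> set ys"
    by (meson order.trans set_drop_subset set_take_subset)
  ultimately show ?thesis using ys by (auto simp: idx_def)
qed

lemma chunk_sum:
  fixes f :: "nat \<Rightarrow> nat list \<Rightarrow> real"
  shows "(\<Sum>ys\<in>idx n (a * P). \<Prod>j<a. f j (take P (drop (j * P) ys))) = (\<Prod>j<a. \<Sum>zs\<in>idx n P. f j zs)"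
proof (induction a arbitrary: f)
  case 0
  then show ?case by simp
next
  case (Suc a)
  have "(\<Sum>ys\<in>idx n (Suc a * P). \<Prod>j<Suc a. f j (take P (drop (j * P) ys)))
      = (\<Sum>ys\<in>idx n (P + a * P). \<Prod>j<Suc a. f j (take P (drop (j * P) ys)))" by simp
  also have "\<dots> = (\<Sum>(zs, ws)\<in>idx n P \<times> idx n (a * P). \<Prod>j<Suc a. f j (take P (drop (j * P) (zs @ ws))))"
    unfolding idx_append by (subst sum.reindex[OF inj_append_idx]) (simp add: case_prod_unfold)
  also have "\<dots> = (\<Sum>(zs, ws)\<in>idx n P \<times> idx n (a * P). f 0 zs * (\<Prod>j<a. f (Suc j) (take P (drop (j * P) ws))))"
  proof (rule sum.cong[OF refl], clarify)
    fix zs ws assume zs: "zs \<in> idx n P"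
    then have lz: "length zs = P" by (simp add: idx_def)
    have "(\<Prod>j<Suc a. f j (take P (drop (j * P) (zs @ ws))))
       = f 0 (take P (drop (0 * P) (zs @ ws))) * (\<Prod>j<a. f (Suc j) (take P (drop (Suc j * P) (zs @ ws))))"
      by (rule prod.lessThan_Suc_shift)
    also have "\<dots> = f 0 zs * (\<Prod>j<a. f (Suc j) (take P (drop (j * P) ws)))"
      using lz by simp
    finally show "(\<Prod>j<Suc a. f j (take P (drop (j * P) (zs @ ws)))) = f 0 zs * (\<Prod>j<a. f (Suc j) (take P (drop (j * P) ws)))" .
  qed
  also have "\<dots> = (\<Sum>zs\<in>idx n P. f 0 zs) * (\<Sum>ws\<in>idx n (a * P). \<Prod>j<a. f (Suc j) (take P (drop (j * P) ws)))"
    by (simp add: sum.cartesian_product[symmetric] sum_distrib_left sum_distrib_right) (rule sum.swap)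
  also have "\<dots> = (\<Sum>zs\<in>idx n P. f 0 zs) * (\<Prod>j<a. \<Sum>zs\<in>idx n P. f (Suc j) zs)"
    using Suc.IH[of "\<lambda>j. f (Suc j)"] by simp
  also have "\<dots> = (\<Prod>j<Suc a. \<Sum>zs\<in>idx n P. f j zs)" by (simp only: prod.lessThan_Suc_shift)
  finally show ?case .
qed

lemma tprod_nonneg:
  assumes "q \<ge> 1" "\<forall>xs\<in>idx n m. A xs \<ge> 0" "\<forall>xs\<in>idx n q. Bk xs \<ge> 0"
    and "i < n" "ys \<in> idx n ((m - 1) * (q - 1))" "m \<ge> 1"
  shows "tprod n m q A Bk (i # ys) \<ge> 0"
proof -
  have "0 \<le> A (i # xs) * (\<Prod>j<m - 1. Bk ((xs ! j) # take (q - 1) (drop (j * (q - 1)) ys)))"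
    if xs: "xs \<in> idx n (m - 1)" for xs
  proof -
    have "0 \<le> A (i # xs)" using assms xs by (auto simp: idx_def)
    moreover have "0 \<le> Bk ((xs ! j) # take (q - 1) (drop (j * (q - 1)) ys))" if j: "j < m - 1" for j
    proof -
      have "take (q - 1) (drop (j * (q - 1)) ys) \<in> idx n (q - 1)" using chunk_in[OF assms(5)] j by auto
      moreover have "xs ! j < n" using idx_nth[OF xs] j by auto
      ultimately show ?thesis using assms(1,3) by (auto simp: idx_def)
    qed
    ultimately show ?thesis by (intro mult_nonneg_nonneg prod_nonneg) auto
  qed
  then show ?thesis unfolding tprod_def by (simp add: sum_nonneg)
qed

lemma rsum_tprod:
  assumes q: "q \<ge> 1" and A: "\<forall>xs\<in>idx n m. A xs \<ge> 0" and Bk: "\<forall>xs\<in>idx n q. Bk xs \<ge> 0"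
    and i: "i < n" and m: "m \<ge> 1"
  shows "rsum n ((m - 1) * (q - 1) + 1) (tprod n m q A Bk) i = Tm n (m - 1) A (rsum n q Bk) i"
proof -
  have "rsum n ((m - 1) * (q - 1) + 1) (tprod n m q A Bk) i
      = (\<Sum>ys\<in>idx n ((m - 1) * (q - 1)). tprod n m q A Bk (i # ys))"
    unfolding rsum_def using tprod_nonneg[OF q A Bk i _ m] by (intro sum.cong) auto
  also have "\<dots> = (\<Sum>xs\<in>idx n (m - 1). A (i # xs) * (\<Sum>ys\<in>idx n ((m - 1) * (q - 1)).
        (\<Prod>j<m - 1. Bk ((xs ! j) # take (q - 1) (drop (j * (q - 1)) ys)))))"
    unfolding tprod_def by (simp add: sum_distrib_left) (rule sum.swap)
  also have "\<dots> = (\<Sum>xs\<in>idx n (m - 1). A (i # xs) * (\<Prod>j<m - 1. rsum n q Bk (xs ! j)))"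
  proof (rule sum.cong[OF refl])
    fix xs assume xs: "xs \<in> idx n (m - 1)"
    have "(\<Sum>ys\<in>idx n ((m - 1) * (q - 1)). (\<Prod>j<m - 1. Bk ((xs ! j) # take (q - 1) (drop (j * (q - 1)) ys))))
        = (\<Prod>j<m - 1. \<Sum>zs\<in>idx n (q - 1). Bk ((xs ! j) # zs))"
      by (rule chunk_sum)
    also have "\<dots> = (\<Prod>j<m - 1. rsum n q Bk (xs ! j))"
    proof (rule prod.cong[OF refl])
      fix j assume "j \<in> {..<m - 1}"
      then have "xs ! j < n" using idx_nth[OF xs] by auto
      then show "(\<Sum>zs\<in>idx n (q - 1). Bk ((xs ! j) # zs)) = rsum n q Bk (xs ! j)"
        unfolding rsum_def using Bk q by (intro sum.cong) (auto simp: idx_def)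
    qed
    finally show "A (i # xs) * (\<Sum>ys\<in>idx n ((m - 1) * (q - 1)). (\<Prod>j<m - 1. Bk ((xs ! j) # take (q - 1) (drop (j * (q - 1)) ys))))
       = A (i # xs) * (\<Prod>j<m - 1. rsum n q Bk (xs ! j))" by simp
  qed
  also have "\<dots> = Tm n (m - 1) A (rsum n q Bk) i" by (simp add: Tm_def)
  finally show ?thesis .
qed

lemma tord_ge1: "m \<ge> 1 \<Longrightarrow> tord m k \<ge> 1"
proof (cases k)
  case (Suc j) then show "m \<ge> 1 \<Longrightarrow> ?thesis" by (cases j) auto
qed simp

lemma tord_Suc: "k \<ge> 1 \<Longrightarrow> tord m (k + 1) = (m - 1) * (tord m k - 1) + 1"
  by (cases k) auto

lemma tpow_Suc: "k \<ge> 1 \<Longrightarrow> tpow n m A (k + 1) = tprod n m (tord m k) A (tpow n m A k)"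
  by (cases k) auto

lemma tpow_nonneg:
  assumes "m \<ge> 1" "\<forall>xs\<in>idx n m. A xs \<ge> 0" "k \<ge> 1"
  shows "\<forall>xs\<in>idx n (tord m k). tpow n m A k xs \<ge> 0"
  using assms(3)
proof (induction k rule: dec_induct)
  case base
  then show ?case using assms by simp
next
  case (step k)
  show ?case
  proof
    fix xs assume xs: "xs \<in> idx n (tord m (Suc k))"
    have "length xs = (m - 1) * (tord m k - 1) + 1" using xs tord_Suc[OF step(1)] by (simp add: idx_def)
    then obtain i ys where xs': "xs = i # ys" by (cases xs) auto
    have "i < n" "ys \<in> idx n ((m - 1) * (tord m k - 1))"
      using xs xs' tord_Suc[OF step(1)] by (auto simp: idx_def)
    then show "tpow n m A (Suc k) xs \<ge> 0"
      using tprod_nonneg[OF tord_ge1[OF assms(1)] assms(2) step(3)] xs' tpow_Suc[OF step(1)] assms(1) by simp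
  qed
qed



lemma Tm_one:
  assumes "m \<ge> 1" "\<forall>xs\<in>idx n m. A xs \<ge> 0" "i < n"
  shows "Tm n (m - 1) A (\<lambda>_. 1) i = rsum n m A i"
  unfolding Tm_def rsum_def using assms by (intro sum.cong) (auto simp: idx_def)

lemma A_row_nonneg:
  assumes "m \<ge> 1" "\<forall>xs\<in>idx n m. A xs \<ge> 0"
  shows "\<forall>i<n. \<forall>xs\<in>idx n (m - 1). A (i # xs) \<ge> 0"
  using assms by (auto simp: idx_def)

lemma rsum_tpow_pos:
  assumes m: "m \<ge> 2" and A: "\<forall>xs\<in>idx n m. A xs \<ge> 0" and r: "\<forall>i<n. rsum n m A i \<noteq> 0" and k: "k \<ge> 1"
  shows "\<forall>i<n. rsum n (tord m k) (tpow n m A k) i > 0"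
  using k
proof (induction k rule: dec_induct)
  case base
  have "rsum n m A i \<ge> 0" for i unfolding rsum_def by (intro sum_nonneg) auto
  then show ?case using r by (simp add: order_less_le)
next
  case (step k)
  show ?case
  proof (intro allI impI)
    fix i assume i: "i < n"
    define d where "d = rsum n (tord m k) (tpow n m A k)"
    have nz: "n \<noteq> 0" using i by auto
    define a where "a = Min (d ` {..<n})"
    have fin: "finite (d ` {..<n})" "d ` {..<n} \<noteq> {}" using nz by (auto simp: lessThan_empty_iff)
    have apos: "a > 0" using Min_in[OF fin] step(3) unfolding a_def d_def by auto
    have amin: "\<forall>j<n. d j \<ge> a" unfolding a_def using fin by auto
    have "rsum n (tord m (k + 1)) (tpow n m A (k + 1)) i = Tm n (m - 1) A d i"
      unfolding d_def tord_Suc[OF step(1)] tpow_Suc[OF step(1)]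
      using rsum_tprod[OF tord_ge1 A tpow_nonneg[OF _ A step(1)] i] m by simp
    also have "\<dots> \<ge> a ^ (m - 1) * Tm n (m - 1) A (\<lambda>_. 1) i"
      using A_row_nonneg[OF _ A] m i amin apos by (intro Tm_lower) auto
    finally have "a ^ (m - 1) * rsum n m A i \<le> rsum n (tord m (k + 1)) (tpow n m A (k + 1)) i"
      using Tm_one[OF _ A i] m by simp
    moreover have "rsum n m A i > 0"
    proof -
      have "rsum n m A i \<ge> 0" unfolding rsum_def by (intro sum_nonneg) auto
      then show ?thesis using r i by (simp add: order_less_le)
    qed
    ultimately show "rsum n (tord m (Suc k)) (tpow n m A (Suc k)) i > 0"
      using apos by (smt (verit) Suc_eq_plus1 mult_pos_pos zero_less_power)
  qed
qed

lemma eig_upper: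
  fixes A :: "nat list \<Rightarrow> real" and d :: "nat \<Rightarrow> real"
  assumes m: "m \<ge> 2" and A: "\<forall>xs\<in>idx n m. A xs \<ge> 0" and dpos: "\<forall>i<n. d i > 0"
    and eig: "is_eigenvalue n m A l"
  shows "\<exists>i<n. cmod l \<le> Tm n (m - 1) A d i / d i ^ (m - 1)"
proof -
  define p where "p = m - 1"
  obtain x where xnz: "\<exists>i<n. x i \<noteq> 0"
    and eq: "\<forall>i<n. (\<Sum>is\<in>idx n p. complex_of_real (A (i # is)) * (\<Prod>j<p. x (is ! j))) = l * x i ^ p"
    using eig unfolding is_eigenvalue_def p_def by blast
  define z where "z i = cmod (x i) / d i" for i
  obtain i1 where i1: "i1 < n" "x i1 \<noteq> 0" using xnz by blast
  have fin: "finite (z ` {..<n})" "z ` {..<n} \<noteq> {}" using i1 by auto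
  define t where "t = Max (z ` {..<n})"
  obtain i0 where i0: "i0 < n" "z i0 = t" using Max_in[OF fin] unfolding t_def by auto
  have tmax: "\<forall>j<n. z j \<le> t" unfolding t_def using fin by auto
  have tpos: "t > 0"
  proof -
    have "z i1 > 0" using i1 dpos by (simp add: z_def)
    then show ?thesis using tmax i1 by force
  qed
  have xle: "cmod (x j) \<le> t * d j" if "j < n" for j
    using tmax that dpos by (auto simp: z_def divide_le_eq)
  have Ar: "\<forall>i<n. \<forall>xs\<in>idx n p. A (i # xs) \<ge> 0" using A_row_nonneg[OF _ A] m by (simp add: p_def)
  have "cmod l * cmod (x i0) ^ p = cmod (l * x i0 ^ p)" by (simp add: norm_mult norm_power)
  also have "\<dots> = cmod (\<Sum>is\<in>idx n p. complex_of_real (A (i0 # is)) * (\<Prod>j<p. x (is ! j)))"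
    using eq i0 by simp
  also have "\<dots> \<le> (\<Sum>is\<in>idx n p. cmod (complex_of_real (A (i0 # is)) * (\<Prod>j<p. x (is ! j))))"
    by (rule norm_sum)
  also have "\<dots> \<le> (\<Sum>is\<in>idx n p. A (i0 # is) * (\<Prod>j<p. t * d (is ! j)))"
  proof (rule sum_mono)
    fix xs assume xs: "xs \<in> idx n p"
    have "cmod (complex_of_real (A (i0 # xs)) * (\<Prod>j<p. x (xs ! j))) = A (i0 # xs) * (\<Prod>j<p. cmod (x (xs ! j)))"
      using Ar i0 xs by (simp add: norm_mult prod_norm)
    also have "\<dots> \<le> A (i0 # xs) * (\<Prod>j<p. t * d (xs ! j))"
      using Ar i0 xs xle idx_nth[OF xs] by (intro mult_left_mono prod_mono) auto
    finally show "cmod (complex_of_real (A (i0 # xs)) * (\<Prod>j<p. x (xs ! j))) \<le> A (i0 # xs) * (\<Prod>j<p. t * d (xs ! j))" .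
  qed
  also have "\<dots> = t ^ p * Tm n p A d i0"
    by (simp add: Tm_def prod.distrib sum_distrib_left algebra_simps)
  finally have ineq: "cmod l * cmod (x i0) ^ p \<le> t ^ p * Tm n p A d i0" .
  have "d i0 > 0" using dpos i0 by blast
  then have "cmod (x i0) = t * d i0" using i0 by (simp add: z_def field_simps)
  then have "cmod l * d i0 ^ p * t ^ p \<le> Tm n p A d i0 * t ^ p"
    using ineq by (simp add: power_mult_distrib algebra_simps)
  then have "cmod l * d i0 ^ p \<le> Tm n p A d i0" using tpos by simp
  then have "cmod l \<le> Tm n p A d i0 / d i0 ^ p" using dpos i0 by (simp add: field_simps)
  then show ?thesis using i0 by (auto simp: p_def)
qed



theorem theorem3p4:
  fixes m n k :: nat and A :: "nat list \<Rightarrow> real"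
  assumes "m \<ge> 2" and "n \<ge> 1" and "k \<ge> 1"
    and "\<forall>xs\<in>idx n m. A xs \<ge> 0"
    and "\<forall>i<n. rsum n m A i \<noteq> 0"
  shows "(MIN i\<in>{..<n}. rsum n (tord m (k + 1)) (tpow n m A (k + 1)) i
             / (rsum n (tord m k) (tpow n m A k) i) ^ (m - 1)) \<le> spec_radius n m A
       \<and> spec_radius n m A \<le> (MAX i\<in>{..<n}. rsum n (tord m (k + 1)) (tpow n m A (k + 1)) i
             / (rsum n (tord m k) (tpow n m A k) i) ^ (m - 1))"
proof -
  note m = assms(1) and n = assms(2) and k = assms(3) and A = assms(4) and r = assms(5)
  define p where "p = m - 1"
  have p1: "p \<ge> 1" using m by (simp add: p_def)
  define d where "d i = rsum n (tord m k) (tpow n m A k) i" for i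
  define R where "R i = rsum n (tord m (k + 1)) (tpow n m A (k + 1)) i / (rsum n (tord m k) (tpow n m A k) i) ^ (m - 1)" for i
  have dpos: "\<forall>i<n. d i > 0" using rsum_tpow_pos[OF m A r k] by (simp add: d_def)
  have rs: "rsum n (tord m (k + 1)) (tpow n m A (k + 1)) i = Tm n p A d i" if i: "i < n" for i
    unfolding d_def[abs_def] tord_Suc[OF k] tpow_Suc[OF k] p_def
    using rsum_tprod[OF tord_ge1 A tpow_nonneg[OF _ A k] i] m by simp
  have Rpos: "R i > 0" if "i < n" for i
    using rsum_tpow_pos[OF m A r, of "k + 1"] that rsum_tpow_pos[OF m A r k] by (simp add: R_def)
  have R_eq: "R i = Tm n p A d i / d i ^ p" if "i < n" for i
    using rs[OF that] by (simp add: R_def d_def p_def)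
  have fin: "finite (R ` {..<n})" "R ` {..<n} \<noteq> {}" using n by (auto simp: lessThan_empty_iff)
  define c where "c = Min (R ` {..<n})"
  define M where "M = Max (R ` {..<n})"
  have cpos: "c > 0" using Min_in[OF fin] Rpos unfolding c_def by auto
  have cle: "\<forall>i<n. c \<le> R i" unfolding c_def using fin by auto
  have Mge: "\<forall>i<n. R i \<le> M" unfolding M_def using fin by auto
  define B' where "B' xs = A xs * (\<Prod>j<p. d (tl xs ! j)) / d (hd xs) ^ p" for xs
  have Ar: "\<forall>i<n. \<forall>xs\<in>idx n p. A (i # xs) \<ge> 0" using A_row_nonneg[OF _ A] m by (simp add: p_def)
  have TB: "Tm n p B' y i = Tm n p A (\<lambda>l. d l * y l) i / d i ^ p" for y i
    unfolding Tm_def B'_def by (simp add: sum_divide_distrib prod.distrib algebra_simps)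
  have B'nn: "\<forall>i<n. \<forall>xs\<in>idx n p. B' (i # xs) \<ge> 0"
  proof (intro allI impI ballI)
    fix i xs assume i: "i < n" and xs: "xs \<in> idx n p"
    have "0 \<le> A (i # xs)" using Ar i xs by blast
    moreover have "0 \<le> (\<Prod>j<p. d (xs ! j))"
      using dpos idx_nth[OF xs] by (intro prod_nonneg) (auto intro: less_imp_le)
    moreover have "0 < d i ^ p" using dpos i by simp
    ultimately show "0 \<le> B' (i # xs)" by (simp add: B'_def)
  qed
  have B'one: "\<forall>i<n. Tm n p B' (\<lambda>_. 1) i \<ge> c"
    using cle R_eq TB by simp
  obtain y \<mu> where y: "\<forall>i<n. y i \<ge> 0" "(\<Sum>i<n. y i) = 1" "c \<le> \<mu>" "\<forall>i<n. Tm n p B' y i = \<mu> * y i ^ p"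
    using eig_exists[OF n p1 B'nn cpos B'one] by blast
  define x where "x l = complex_of_real (d l * y l)" for l
  have eigv: "is_eigenvalue n m A (complex_of_real \<mu>)"
    unfolding is_eigenvalue_def
  proof (intro exI[of _ x] conjI allI impI)
    obtain i where i: "i < n" "y i \<noteq> 0"
    proof (rule ccontr)
      assume "\<not> thesis"
      then have "\<forall>i<n. y i = 0" using that by blast
      then show False using y(2) by simp
    qed
    then show "\<exists>i<n. x i \<noteq> 0" using dpos by (auto simp: x_def intro!: exI[of _ i])
  next
    fix i assume i: "i < n"
    have "(\<Sum>is\<in>idx n (m - 1). complex_of_real (A (i # is)) * (\<Prod>j<m - 1. x (is ! j)))
        = complex_of_real (Tm n p A (\<lambda>l. d l * y l) i)"
      by (simp add: Tm_def x_def p_def)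
    also have "Tm n p A (\<lambda>l. d l * y l) i = d i ^ p * Tm n p B' y i"
    proof -
      have "d i > 0" using dpos i by blast
      then show ?thesis using TB[of y i] by simp
    qed
    also have "\<dots> = \<mu> * (d i * y i) ^ p" using y(4) i by (simp add: power_mult_distrib)
    finally show "(\<Sum>is\<in>idx n (m - 1). complex_of_real (A (i # is)) * (\<Prod>j<m - 1. x (is ! j)))
        = complex_of_real \<mu> * x i ^ (m - 1)" by (simp add: x_def p_def)
  qed
  define S where "S = cmod ` {l. is_eigenvalue n m A l}"
  have bdd: "\<forall>s\<in>S. s \<le> M"
  proof
    fix s assume "s \<in> S"
    then obtain l where l: "is_eigenvalue n m A l" "s = cmod l" by (auto simp: S_def)
    obtain i where "i < n" "cmod l \<le> Tm n (m - 1) A d i / d i ^ (m - 1)"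
      using eig_upper[OF m A dpos l(1)] by blast
    then show "s \<le> M" using R_eq Mge l(2) by (force simp: p_def)
  qed
  have muS: "\<mu> \<in> S" using eigv y(3) cpos unfolding S_def by (intro image_eqI[of _ _ "complex_of_real \<mu>"]) auto
  have "c \<le> Sup S"
    using y(3) muS bdd by (meson bdd_above_def cSup_upper order_trans)
  moreover have "Sup S \<le> M" using muS bdd by (intro cSup_least) auto
  ultimately show ?thesis unfolding spec_radius_def S_def[symmetric] c_def M_def R_def by simp
qed


end
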